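(* Let $\mathcal F$ be a finite family of nonempty subsets of $[r]$. Then $\Delta_{\mathcal F}$ equals the set of all $x\in\mathbb R^r$ with $x_i\ge0$ for all $i$, $x_1+\dots+x_r=|\mathcal F|$, and $$\sum_{i\in G}x_i\;\ge\;\bigl|\{F\in\mathcal F: F\subseteq G\}\bigr|\qquad\text{for all } G\subseteq[r].$$ Moreover, it suffices to impose these inequalities for the sets $G$ belonging to the building closure $\widehat{\mathcal F}$ of $\mathcal F$.
   Context: For $F\subseteq[r]$ nonempty, $\Delta_F=\{x\in\mathbb R^r_{\ge0}: \sum_i x_i=1,\ x_i=0 \text{ for } i\notin F\}=\operatorname{conv}\{e_i:i\in F\}$. For a family $\mathcal F$ of nonempty subsets of $[r]$, $\Delta_{\mathcal F}=\sum_{F\in\mathcal F}\Delta_F$ (Minkowski sum). The building closure $\widehat{\mathcal F}$ is the smallest family of subsets of $[r]$ containing $\mathcal F$ and all singletons such that $F\cup F'\in\widehat{\mathcal F}$ whenever $F,F'\in\widehat{\mathcal F}$ and $F\cap F'\ne\emptyset$. *)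

theory Defs
  imports "HOL-Analysis.Analysis" "HOL-Library.Set_Algebras"
begin

text \<open>Coordinates of R^r are indexed by the finite type 'n (playing the role of [r]).
  The simplex Delta_F of a nonempty F, a subset of [r].\<close>
definition simplex_face :: "'n::finite set \<Rightarrow> (real^'n) set" where
  "simplex_face F = {x. (\<forall>i. x $ i \<ge> 0) \<and> (\<Sum>i\<in>UNIV. x $ i) = 1 \<and> (\<forall>i. i \<notin> F \<longrightarrow> x $ i = 0)}"

text \<open>Minkowski sum Delta_{\<F>} of the simplices (sum of sets via Set_Algebras; empty family gives {0}).\<close>
definition family_polytope :: "'n::finite set set \<Rightarrow> (real^'n) set" where
  "family_polytope \<F> = (\<Sum>F\<in>\<F>. simplex_face F)"

inductive_set building_closure :: "'n set set \<Rightarrow> 'n set set" for \<F> where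
  base: "F \<in> \<F> \<Longrightarrow> F \<in> building_closure \<F>"
| singleton: "{i} \<in> building_closure \<F>"
| union: "F \<in> building_closure \<F> \<Longrightarrow> F' \<in> building_closure \<F> \<Longrightarrow> F \<inter> F' \<noteq> {}
          \<Longrightarrow> F \<union> F' \<in> building_closure \<F>"

end

theory Submission
  imports Defs
begin

lemma simplex_face_closed: "closed (simplex_face F)"
proof -
  have "simplex_face F = {x. \<forall>i. x $ i \<ge> 0} \<inter> {x. (\<Sum>i\<in>UNIV. x $ i) = 1} \<inter> (\<Inter>i\<in>-F. {x. x $ i = 0})"
    unfolding simplex_face_def by auto
  moreover have "closed {x::real^'a. \<forall>i. x $ i \<ge> 0}"
    by (intro closed_Collect_all closed_halfspace_component_ge_cart)
  moreover have "closed {x::real^'a. (\<Sum>i\<in>UNIV. x $ i) = 1}"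
    by (intro closed_Collect_eq continuous_intros)
  moreover have "closed {x::real^'a. x $ i = 0}" for i
    by (intro closed_Collect_eq continuous_intros)
  ultimately show ?thesis by (auto intro!: closed_Int closed_INT)
qed

lemma simplex_face_bounded: "simplex_face F \<subseteq> cbox 0 (\<chi> i. 1)"
proof
  fix x assume x: "x \<in> simplex_face F"
  have "x $ i \<le> 1" for i
  proof -
    have "x $ i \<le> (\<Sum>j\<in>UNIV. x $ j)" using x by (intro member_le_sum) (auto simp: simplex_face_def)
    thus ?thesis using x by (simp add: simplex_face_def)
  qed
  thus "x \<in> cbox 0 (\<chi> i. 1)" using x by (auto simp: mem_box_cart simplex_face_def)
qed

lemma simplex_face_compact: "compact (simplex_face F)"
  using simplex_face_closed simplex_face_bounded compact_cbox
  by (metis compact_Int_closed inf.absorb_iff2)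

lemma simplex_face_convex: "convex (simplex_face F)"
  unfolding simplex_face_def convex_def
  by (auto simp: sum.distrib sum_distrib_left[symmetric] add_nonneg_nonneg)

lemma compact_set_sum:
  fixes B :: "'i \<Rightarrow> 'a::real_normed_vector set"
  assumes "finite A" "\<And>i. i \<in> A \<Longrightarrow> compact (B i)"
  shows "compact (\<Sum>i\<in>A. B i)"
  using assms
proof (induction A rule: finite_induct)
  case empty then show ?case by simp
next
  case (insert a A)
  have "(\<Sum>i\<in>insert a A. B i) = B a + (\<Sum>i\<in>A. B i)" using insert by simp
  also have "\<dots> = {x + y | x y. x \<in> B a \<and> y \<in> (\<Sum>i\<in>A. B i)}"
    unfolding set_plus_def by blast
  finally show ?case using insert compact_sums[of "B a" "\<Sum>i\<in>A. B i"] by auto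
qed

lemma family_polytope_closed: "finite \<F> \<Longrightarrow> closed (family_polytope \<F>)"
  unfolding family_polytope_def
  by (intro compact_imp_closed compact_set_sum simplex_face_compact)

lemma family_polytope_convex: "convex (family_polytope \<F>)"
  unfolding family_polytope_def
  by (intro convex_set_sum simplex_face_convex)


lemma sum_face_G:
  assumes "y \<in> simplex_face F"
  shows "(\<Sum>i\<in>G. y $ i) \<ge> (if F \<subseteq> G then 1 else 0)"
proof (cases "F \<subseteq> G")
  case True
  have "(\<Sum>i\<in>G. y $ i) = (\<Sum>i\<in>UNIV. y $ i)"
    using assms True by (intro sum.mono_neutral_left) (auto simp: simplex_face_def)
  then show ?thesis using assms True by (simp add: simplex_face_def)
next
  case False
  then show ?thesis using assms by (auto simp: simplex_face_def intro!: sum_nonneg)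
qed

lemma polytope_subset:
  assumes fin: "finite \<F>" and x: "x \<in> family_polytope \<F>"
  shows "(\<forall>i. x $ i \<ge> 0) \<and> (\<Sum>i\<in>UNIV. x $ i) = real (card \<F>) \<and>
               (\<forall>G. (\<Sum>i\<in>G. x $ i) \<ge> real (card {F\<in>\<F>. F \<subseteq> G}))"
proof -
  obtain s where xs: "x = (\<Sum>F\<in>\<F>. s F)" and s: "\<forall>F\<in>\<F>. s F \<in> simplex_face F"
    using x unfolding family_polytope_def set_sum_alt[OF fin] by blast
  have "x $ i \<ge> 0" for i
    unfolding xs sum_component using s by (auto simp: simplex_face_def intro!: sum_nonneg)
  moreover have "(\<Sum>i\<in>UNIV. x $ i) = real (card \<F>)"
    unfolding xs sum_component using s
    by (subst sum.swap) (simp add: simplex_face_def)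
  moreover have "(\<Sum>i\<in>G. x $ i) \<ge> real (card {F\<in>\<F>. F \<subseteq> G})" for G
  proof -
    have "real (card {F\<in>\<F>. F \<subseteq> G}) = (\<Sum>F\<in>\<F>. (if F \<subseteq> G then 1 else 0))"
      using fin by (simp add: sum.If_cases Int_def conj_commute)
    also have "\<dots> \<le> (\<Sum>F\<in>\<F>. \<Sum>i\<in>G. s F $ i)"
      using s sum_face_G by (intro sum_mono) blast
    also have "\<dots> = (\<Sum>i\<in>G. x $ i)"
      unfolding xs sum_component by (rule sum.swap)
    finally show ?thesis .
  qed
  ultimately show ?thesis by blast
qed


lemma closure_suffices:
  fixes \<F> :: "'n::finite set set" and x :: "real^'n"
  assumes fin: "finite \<F>" and nonneg: "\<forall>i. x $ i \<ge> 0"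
    and H: "\<forall>G\<in>building_closure \<F>. (\<Sum>i\<in>G. x $ i) \<ge> real (card {F\<in>\<F>. F \<subseteq> G})"
  shows "(\<Sum>i\<in>G. x $ i) \<ge> real (card {F\<in>\<F>. F \<subseteq> G})"
proof -
  define C where "C = {H \<in> building_closure \<F>. H \<subseteq> G}"
  define M where "M = {H\<in>C. \<forall>H'\<in>C. H \<subseteq> H' \<longrightarrow> H = H'}"
  have finC: "finite C" by (rule finite_subset[of _ UNIV]) auto
  have finM: "finite M" unfolding M_def using finC by auto
  have above: "\<exists>m\<in>M. H \<subseteq> m" if "H \<in> C" for H
    using finite_has_maximal2[OF finC that] unfolding M_def by auto
  have MC: "M \<subseteq> C" unfolding M_def by auto
  have GU: "G = \<Union>M"
  proof
    show "G \<subseteq> \<Union>M"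
    proof
      fix i assume "i \<in> G"
      hence "{i} \<in> C" unfolding C_def by (auto intro: building_closure.singleton)
      thus "i \<in> \<Union>M" using above by blast
    qed
    show "\<Union>M \<subseteq> G" using MC unfolding C_def by auto
  qed
  have disj: "\<forall>A\<in>M. \<forall>B\<in>M. A \<noteq> B \<longrightarrow> A \<inter> B = {}"
  proof (intro ballI impI)
    fix A B assume A: "A \<in> M" and B: "B \<in> M" and ne: "A \<noteq> B"
    show "A \<inter> B = {}"
    proof (rule ccontr)
      assume "A \<inter> B \<noteq> {}"
      hence "A \<union> B \<in> C" using A B MC unfolding C_def by (auto intro: building_closure.union)
      hence "A = A \<union> B" "B = A \<union> B" using A B unfolding M_def by auto
      thus False using ne by auto
    qed
  qed
  have "real (card {F\<in>\<F>. F \<subseteq> G}) \<le> real (card (\<Union>m\<in>M. {F\<in>\<F>. F \<subseteq> m}))"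
  proof -
    have "{F\<in>\<F>. F \<subseteq> G} \<subseteq> (\<Union>m\<in>M. {F\<in>\<F>. F \<subseteq> m})"
    proof
      fix F assume "F \<in> {F\<in>\<F>. F \<subseteq> G}"
      hence "F \<in> C" "F \<in> \<F>" unfolding C_def by (auto intro: building_closure.base)
      thus "F \<in> (\<Union>m\<in>M. {F\<in>\<F>. F \<subseteq> m})" using above by blast
    qed
    thus ?thesis using fin by (intro of_nat_mono card_mono) auto
  qed
  also have "\<dots> \<le> real (\<Sum>m\<in>M. card {F\<in>\<F>. F \<subseteq> m})"
    by (intro of_nat_mono card_UN_le finM)
  also have "\<dots> = (\<Sum>m\<in>M. real (card {F\<in>\<F>. F \<subseteq> m}))" by simp
  also have "\<dots> \<le> (\<Sum>m\<in>M. \<Sum>i\<in>m. x $ i)"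
    using H MC unfolding C_def by (intro sum_mono) auto
  also have "\<dots> = (\<Sum>i\<in>\<Union>M. x $ i)"
    by (subst sum.Union_disjoint) (use disj in auto)
  finally show ?thesis using GU by simp
qed


lemma key_ineq:
  fixes \<F> :: "'n::finite set set" and x :: "real^'n"
  assumes fin: "finite \<F>" and ne: "\<forall>F\<in>\<F>. F \<noteq> {}"
    and nonneg: "\<forall>i. x $ i \<ge> 0" and tot: "(\<Sum>i\<in>UNIV. x $ i) = real (card \<F>)"
    and low: "\<forall>G. (\<Sum>i\<in>G. x $ i) \<ge> real (card {F\<in>\<F>. F \<subseteq> G})"
  shows "(\<Sum>F\<in>\<F>. Min (w ` F)) \<le> (\<Sum>i\<in>UNIV. w i * x $ i)"
proof (induction "card (range w)" arbitrary: w rule: less_induct)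
  case less
  define m where "m = Min (range w)"
  have mle: "m \<le> w i" for i unfolding m_def by (rule Min_le) auto
  have min_range: "m \<in> range w" unfolding m_def by (rule Min_in) auto
  define T where "T = {i. w i = m}"
  show ?case
  proof (cases "range w = {m}")
    case True
    hence wm: "w i = m" for i by auto
    have "(\<Sum>F\<in>\<F>. Min (w ` F)) = (\<Sum>F\<in>\<F>. m)"
    proof (rule sum.cong)
      fix F assume "F \<in> \<F>"
      hence "w ` F = {m}" using ne wm by auto
      thus "Min (w ` F) = m" by simp
    qed simp
    also have "\<dots> = m * real (card \<F>)" by simp
    also have "\<dots> = (\<Sum>i\<in>UNIV. w i * x $ i)" using wm by (simp add: tot[symmetric] sum_distrib_left)
    finally show ?thesis by simp
  next
    case False
    have ne2: "range w - {m} \<noteq> {}" using False min_range by auto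
    define m2 where "m2 = Min (range w - {m})"
    have m2le: "w i \<noteq> m \<Longrightarrow> m2 \<le> w i" for i unfolding m2_def by (rule Min_le) auto
    have m2in: "m2 \<in> range w - {m}" unfolding m2_def using ne2 by (intro Min_in) auto
    have mm2: "m \<le> m2" using m2in mle by auto
    define d where "d = m2 - m"
    have d0: "d \<ge> 0" using mm2 d_def by simp
    define w' where "w' = (\<lambda>i. if w i = m then m2 else w i)"
    have rw': "range w' = range w - {m}"
      using m2in unfolding w'_def by (auto split: if_splits)
    have "card (range w') < card (range w)"
      unfolding rw' using min_range by (intro psubset_card_mono) auto
    hence IH: "(\<Sum>F\<in>\<F>. Min (w' ` F)) \<le> (\<Sum>i\<in>UNIV. w' i * x $ i)" by (rule less)
    have w'ge: "m2 \<le> w' i" for i unfolding w'_def using m2le by auto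
    have minF: "Min (w ` F) = Min (w' ` F) - (if F \<inter> T \<noteq> {} then d else 0)" if F: "F \<in> \<F>" for F
    proof (cases "F \<inter> T \<noteq> {}")
      case True
      then obtain i where i: "i \<in> F" "w i = m" unfolding T_def by auto
      have "Min (w ` F) = m" using i mle by (intro Min_eqI) auto
      moreover have "Min (w' ` F) = m2"
      proof (rule Min_eqI)
        have "w' i = m2" using i by (simp add: w'_def)
        thus "m2 \<in> w' ` F" using i(1) by (metis imageI)
      qed (use w'ge in auto)
      ultimately show ?thesis using True d_def by simp
    next
      case False
      hence "w' ` F = w ` F" unfolding w'_def T_def by (auto intro!: image_cong)
      thus ?thesis using False by simp
    qed
    have split: "card \<F> = card {F\<in>\<F>. F \<subseteq> -T} + card {F\<in>\<F>. F \<inter> T \<noteq> {}}"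
    proof -
      have "\<F> = {F\<in>\<F>. F \<subseteq> -T} \<union> {F\<in>\<F>. F \<inter> T \<noteq> {}}" by auto
      hence "card \<F> = card ({F\<in>\<F>. F \<subseteq> -T} \<union> {F\<in>\<F>. F \<inter> T \<noteq> {}})" by simp
      also have "\<dots> = card {F\<in>\<F>. F \<subseteq> -T} + card {F\<in>\<F>. F \<inter> T \<noteq> {}}"
        using fin by (intro card_Un_disjoint) auto
      finally show ?thesis .
    qed
    have xsplit: "(\<Sum>i\<in>UNIV. x $ i) = (\<Sum>i\<in>T. x $ i) + (\<Sum>i\<in>-T. x $ i)"
    proof -
      have "(\<Sum>i\<in>UNIV. x $ i) = (\<Sum>i\<in>T \<union> -T. x $ i)" by simp
      also have "\<dots> = (\<Sum>i\<in>T. x $ i) + (\<Sum>i\<in>-T. x $ i)"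
        by (rule sum.union_disjoint) auto
      finally show ?thesis .
    qed
    have xT: "(\<Sum>i\<in>T. x $ i) \<le> real (card {F\<in>\<F>. F \<inter> T \<noteq> {}})"
      using low[rule_format, of "-T"] xsplit tot split by simp
    have "(\<Sum>F\<in>\<F>. Min (w ` F)) = (\<Sum>F\<in>\<F>. Min (w' ` F)) - (\<Sum>F\<in>\<F>. (if F \<inter> T \<noteq> {} then d else 0))"
      using minF by (simp add: sum_subtractf)
    also have "(\<Sum>F\<in>\<F>. (if F \<inter> T \<noteq> {} then d else 0)) = d * real (card {F\<in>\<F>. F \<inter> T \<noteq> {}})"
      using fin by (simp add: sum.If_cases Int_def conj_commute)
    also have "(\<Sum>F\<in>\<F>. Min (w' ` F)) - d * real (card {F\<in>\<F>. F \<inter> T \<noteq> {}})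
        \<le> (\<Sum>i\<in>UNIV. w' i * x $ i) - d * (\<Sum>i\<in>T. x $ i)"
      using IH xT d0 by (smt (verit) mult_left_mono)
    also have "(\<Sum>i\<in>UNIV. w' i * x $ i) - d * (\<Sum>i\<in>T. x $ i) = (\<Sum>i\<in>UNIV. w i * x $ i)"
    proof -
      have "(\<Sum>i\<in>UNIV. w' i * x $ i) = (\<Sum>i\<in>UNIV. w i * x $ i + (if i \<in> T then d * x $ i else 0))"
        by (rule sum.cong) (auto simp: w'_def T_def d_def algebra_simps)
      also have "\<dots> = (\<Sum>i\<in>UNIV. w i * x $ i) + d * (\<Sum>i\<in>T. x $ i)"
        by (simp add: sum.distrib sum.If_cases sum_distrib_left)
      finally show ?thesis by simp
    qed
    finally show ?thesis .
  qed
qed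


lemma axis_face: "i \<in> F \<Longrightarrow> axis i (1::real) \<in> simplex_face F"
  by (auto simp: simplex_face_def axis_def)

lemma Q_subset_polytope:
  fixes \<F> :: "'n::finite set set" and x :: "real^'n"
  assumes fin: "finite \<F>" and ne: "\<forall>F\<in>\<F>. F \<noteq> {}"
    and nonneg: "\<forall>i. x $ i \<ge> 0" and tot: "(\<Sum>i\<in>UNIV. x $ i) = real (card \<F>)"
    and low: "\<forall>G. (\<Sum>i\<in>G. x $ i) \<ge> real (card {F\<in>\<F>. F \<subseteq> G})"
  shows "x \<in> family_polytope \<F>"
proof (rule ccontr)
  assume "x \<notin> family_polytope \<F>"
  then obtain a b where ab: "inner a x < b" "\<forall>p\<in>family_polytope \<F>. inner a p > b"
    using separating_hyperplane_closed_point[OF family_polytope_convex family_polytope_closed[OF fin]]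
    by blast
  define w where "w = (\<lambda>i. a $ i)"
  define g where "g = (\<lambda>F. SOME i. i \<in> F \<and> w i = Min (w ` F))"
  have g: "g F \<in> F \<and> w (g F) = Min (w ` F)" if "F \<in> \<F>" for F
  proof -
    have "Min (w ` F) \<in> w ` F" using ne that by (intro Min_in) auto
    then obtain i where "i \<in> F \<and> w i = Min (w ` F)" by auto
    thus ?thesis unfolding g_def by (rule someI)
  qed
  define p where "p = (\<Sum>F\<in>\<F>. axis (g F) (1::real))"
  have "p \<in> family_polytope \<F>"
    unfolding family_polytope_def set_sum_alt[OF fin] p_def
    using g axis_face by blast
  hence "inner a p > b" using ab by blast
  moreover have "inner a p = (\<Sum>F\<in>\<F>. Min (w ` F))"
    unfolding p_def inner_sum_right using g by (simp add: inner_axis w_def)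
  moreover have "inner a x = (\<Sum>i\<in>UNIV. w i * x $ i)"
    by (simp add: inner_vec_def w_def)
  moreover have "(\<Sum>F\<in>\<F>. Min (w ` F)) \<le> (\<Sum>i\<in>UNIV. w i * x $ i)"
    by (rule key_ineq[OF fin ne nonneg tot low])
  ultimately show False using ab by simp
qed

theorem proposition3p12:
  fixes \<F> :: "'n::finite set set"
  assumes "finite \<F>"
    and "\<forall>F\<in>\<F>. F \<noteq> {}"
  shows "(family_polytope \<F> =
           {x. (\<forall>i. x $ i \<ge> 0) \<and> (\<Sum>i\<in>UNIV. x $ i) = real (card \<F>) \<and>
               (\<forall>G. (\<Sum>i\<in>G. x $ i) \<ge> real (card {F\<in>\<F>. F \<subseteq> G}))}) \<and>
         (family_polytope \<F> =
           {x. (\<forall>i. x $ i \<ge> 0) \<and> (\<Sum>i\<in>UNIV. x $ i) = real (card \<F>) \<and>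
               (\<forall>G\<in>building_closure \<F>. (\<Sum>i\<in>G. x $ i) \<ge> real (card {F\<in>\<F>. F \<subseteq> G}))})"
proof -
  have 1: "family_polytope \<F> =
           {x. (\<forall>i. x $ i \<ge> 0) \<and> (\<Sum>i\<in>UNIV. x $ i) = real (card \<F>) \<and>
               (\<forall>G. (\<Sum>i\<in>G. x $ i) \<ge> real (card {F\<in>\<F>. F \<subseteq> G}))}"
    using polytope_subset[OF assms(1)] Q_subset_polytope[OF assms] by blast
  moreover have "{x. (\<forall>i. x $ i \<ge> 0) \<and> (\<Sum>i\<in>UNIV. x $ i) = real (card \<F>) \<and>
               (\<forall>G. (\<Sum>i\<in>G. x $ i) \<ge> real (card {F\<in>\<F>. F \<subseteq> G}))} =
           {x. (\<forall>i. x $ i \<ge> 0) \<and> (\<Sum>i\<in>UNIV. x $ i) = real (card \<F>) \<and>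
               (\<forall>G\<in>building_closure \<F>. (\<Sum>i\<in>G. x $ i) \<ge> real (card {F\<in>\<F>. F \<subseteq> G}))}"
    using closure_suffices[OF assms(1)] by blast
  ultimately show ?thesis by simp
qed

end
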